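(* Let $G$ be a graph of order $n$ with a clique partition $F=\{C_1,\dots,C_k\}$, where $s_i^F=|C_i|$ and $s_1^F\ge s_2^F\ge\cdots\ge s_k^F$, and let $P_G$ be the clique partition graph of $G$ with respect to $F$, with adjacency eigenvalues $\lambda_1(P_G)\ge\cdots\ge\lambda_k(P_G)$. Then $$\lambda_k(P_G)\ge -s_1^F.$$ Equality holds if all cliques in $F$ have size $s_1^F$ and $k>n$.
   Context: All graphs are finite and simple. A clique partition of $G$ is a set $F$ of cliques (sets of pairwise adjacent vertices) such that every edge lies in exactly one clique of $F$. The clique partition graph $P_G$ has vertex set $\{1,\dots,k\}$ (vertex $i$ corresponding to $C_i$), with $i\ne j$ adjacent iff $C_i\cap C_j\neq\emptyset$. *)

theory Defs
  imports "Jordan_Normal_Form.Char_Poly"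
begin

definition simple_graph :: "'a set \<Rightarrow> ('a \<Rightarrow> 'a \<Rightarrow> bool) \<Rightarrow> bool" where
  "simple_graph V E \<longleftrightarrow> finite V \<and> (\<forall>u v. E u v \<longrightarrow> u \<in> V \<and> v \<in> V)
     \<and> (\<forall>u v. E u v \<longrightarrow> E v u) \<and> (\<forall>u. \<not> E u u)"

definition is_clique :: "'a set \<Rightarrow> ('a \<Rightarrow> 'a \<Rightarrow> bool) \<Rightarrow> 'a set \<Rightarrow> bool" where
  "is_clique V E C \<longleftrightarrow> C \<subseteq> V \<and> (\<forall>u\<in>C. \<forall>v\<in>C. u \<noteq> v \<longrightarrow> E u v)"

text \<open>A clique partition F = {C_0, ..., C_(k-1)} (indexed from 0, pairwise distinct):
every edge lies in exactly one clique.\<close>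
definition clique_partition :: "'a set \<Rightarrow> ('a \<Rightarrow> 'a \<Rightarrow> bool) \<Rightarrow> nat \<Rightarrow> (nat \<Rightarrow> 'a set) \<Rightarrow> bool" where
  "clique_partition V E k C \<longleftrightarrow> inj_on C {..<k} \<and> (\<forall>i<k. is_clique V E (C i))
     \<and> (\<forall>u v. E u v \<longrightarrow> (\<exists>!i. i < k \<and> u \<in> C i \<and> v \<in> C i))"

definition clique_partition_adj :: "nat \<Rightarrow> (nat \<Rightarrow> 'a set) \<Rightarrow> real mat" where
  "clique_partition_adj k C = mat k k (\<lambda>(i,j). if i \<noteq> j \<and> C i \<inter> C j \<noteq> {} then 1 else 0)"

text \<open>Smallest adjacency eigenvalue (all eigenvalues of a real symmetric matrix are real).\<close>
definition min_eigenvalue :: "real mat \<Rightarrow> real" where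
  "min_eigenvalue A = Min {\<mu>. eigenvalue A \<mu>}"

end

theory Submission
  imports Defs "HOL-Computational_Algebra.Fundamental_Theorem_Algebra"
begin

lemma real_sym_eigenvalue_exists:
  fixes A :: "real mat"
  assumes A: "A \<in> carrier_mat n n" and n: "n > 0"
    and sym: "\<forall>i<n. \<forall>j<n. A $$ (i,j) = A $$ (j,i)"
  shows "\<exists>r. eigenvalue A r"
proof -
  let ?B = "map_mat complex_of_real A"
  have B: "?B \<in> carrier_mat n n" using A by simp
  have "degree (char_poly ?B) = n" using degree_monic_char_poly[OF B] by simp
  then obtain l where "poly (char_poly ?B) l = 0"
    using fundamental_theorem_of_algebra constant_degree n by (metis not_gr_zero)
  hence "eigenvalue ?B l" using eigenvalue_root_char_poly[OF B] by simp
  then obtain z where z: "z \<in> carrier_vec n" "z \<noteq> 0\<^sub>v n" "?B *\<^sub>v z = l \<cdot>\<^sub>v z"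
    unfolding eigenvalue_def eigenvector_def using B by auto
  have Bz: "(\<Sum>j<n. of_real (A$$(i,j)) * z$j) = l * z$i" if i: "i < n" for i
  proof -
    have "(?B *\<^sub>v z) $ i = l * z$i" using z(3) z(1) i by (metis carrier_vecD index_smult_vec(1))
    moreover have "(?B *\<^sub>v z) $ i = (\<Sum>j<n. of_real (A$$(i,j)) * z$j)"
      using i A z(1) by (auto simp: scalar_prod_def lessThan_atLeast0 intro!: sum.cong)
    ultimately show ?thesis by simp
  qed
  define S where "S = (\<Sum>i<n. cnj (z$i) * (\<Sum>j<n. of_real (A$$(i,j)) * z$j))"
  define N where "N = (\<Sum>i<n. cnj (z$i) * z$i)"
  have S1: "S = l * N" unfolding S_def N_def using Bz
    by (simp add: sum_distrib_left mult_ac)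
  have "cnj S = (\<Sum>i<n. \<Sum>j<n. z$i * of_real (A$$(i,j)) * cnj (z$j))"
    unfolding S_def by (simp add: sum_distrib_left mult_ac)
  also have "\<dots> = (\<Sum>j<n. \<Sum>i<n. z$i * of_real (A$$(i,j)) * cnj (z$j))"
    by (rule sum.swap)
  also have "\<dots> = S"
    unfolding S_def using sym by (auto simp: sum_distrib_left mult_ac intro!: sum.cong)
  finally have "cnj S = S" .
  hence "Im S = - Im S" by (metis cnj.sel(2))
  hence ImS: "Im S = 0" by linarith
  define R where "R = (\<Sum>i<n. (cmod (z$i))^2)"
  have NR: "N = of_real R" unfolding N_def R_def
    by (simp add: complex_norm_square mult.commute del: of_real_power)
  from z(1,2) obtain i0 where i0: "i0 < n" "z$i0 \<noteq> 0" by force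
  have "R \<ge> (cmod (z$i0))^2" unfolding R_def
    by (rule member_le_sum, insert i0, auto)
  hence Rpos: "R > 0" using i0 by (smt (verit) zero_less_norm_iff zero_less_power)
  have "l = S / of_real R" using S1 NR Rpos by simp
  hence "Im l = 0" using ImS by (simp add: Im_divide_of_real)
  hence l: "l = of_real (Re l)" by (simp add: complex_eq_iff)
  have "of_real (poly (char_poly A) (Re l)) = poly (char_poly ?B) (of_real (Re l))"
    unfolding of_real_hom.char_poly_hom[OF A] by (rule of_real_hom.poly_map_poly[symmetric])
  also have "\<dots> = 0" using l \<open>poly (char_poly ?B) l = 0\<close> by simp
  finally have "poly (char_poly A) (Re l) = 0" by simp
  thus ?thesis using eigenvalue_root_char_poly[OF A] by blast
qed

lemma adj_carrier: "clique_partition_adj k C \<in> carrier_mat k k"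
  unfolding clique_partition_adj_def by simp

lemma adj_index: "i < k \<Longrightarrow> j < k \<Longrightarrow> clique_partition_adj k C $$ (i,j) =
  (if i \<noteq> j \<and> C i \<inter> C j \<noteq> {} then 1 else 0)"
  unfolding clique_partition_adj_def by simp

lemma cp_clique: "clique_partition V E k C \<Longrightarrow> i < k \<Longrightarrow> is_clique V E (C i)"
  unfolding clique_partition_def by (elim conjE) (erule allE, erule impE, assumption, assumption)

lemma cp_uniq: "clique_partition V E k C \<Longrightarrow> E u v \<Longrightarrow> (\<exists>!l. l < k \<and> u \<in> C l \<and> v \<in> C l)"
  unfolding clique_partition_def by (elim conjE) (erule allE, erule allE, erule impE, assumption, assumption)

lemma card_inter_cliques:
  assumes "simple_graph V E" "clique_partition V E k C" "i < k" "j < k" "i \<noteq> j"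
  shows "card (C i \<inter> C j) = (if C i \<inter> C j \<noteq> {} then 1 else 0)"
proof (cases "C i \<inter> C j = {}")
  case False
  then obtain u where u: "u \<in> C i \<inter> C j" by blast
  have "C i \<inter> C j = {u}"
  proof (rule ccontr)
    assume "C i \<inter> C j \<noteq> {u}"
    then obtain v where v: "v \<in> C i \<inter> C j" "v \<noteq> u" using u by blast
    have cl: "is_clique V E (C i)" using cp_clique[OF assms(2,3)] .
    have "E u v" using cl u v unfolding is_clique_def by (metis IntD1)
    have uniq: "\<exists>!l. l < k \<and> u \<in> C l \<and> v \<in> C l" using cp_uniq[OF assms(2) \<open>E u v\<close>] .
    then obtain l where "\<forall>m. m < k \<and> u \<in> C m \<and> v \<in> C m \<longrightarrow> m = l"
      by (elim ex1E) blast
    moreover have "i < k \<and> u \<in> C i \<and> v \<in> C i" "j < k \<and> u \<in> C j \<and> v \<in> C j"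
      using u v assms(3,4) by auto
    ultimately show False using assms(5) by metis
  qed
  then show ?thesis by simp
qed simp

lemma row_identity:
  fixes x :: "nat \<Rightarrow> real"
  assumes G: "simple_graph V E" and P: "clique_partition V E k C" and i: "i < k"
  shows "(\<Sum>v\<in>C i. \<Sum>j<k. if v \<in> C j then x j else 0)
     = real (card (C i)) * x i + (\<Sum>j<k. clique_partition_adj k C $$ (i,j) * x j)"
proof -
  have fin: "finite (C i)" using G P i unfolding simple_graph_def clique_partition_def is_clique_def
    by (meson finite_subset)
  have "(\<Sum>v\<in>C i. \<Sum>j<k. if v \<in> C j then x j else 0)
      = (\<Sum>j<k. \<Sum>v\<in>C i. if v \<in> C j then x j else 0)" by (rule sum.swap)
  also have "\<dots> = (\<Sum>j<k. real (card (C i \<inter> C j)) * x j)"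
  proof (rule sum.cong[OF refl])
    fix j
    have "(\<Sum>v\<in>C i. if v \<in> C j then x j else 0) = (\<Sum>v\<in>C i \<inter> C j. x j)"
      by (rule sum.inter_restrict[OF fin, symmetric])
    also have "\<dots> = real (card (C i \<inter> C j)) * x j" by (rule sum_constant)
    finally show "(\<Sum>v\<in>C i. if v \<in> C j then x j else 0) = real (card (C i \<inter> C j)) * x j" .
  qed
  also have "\<dots> = (\<Sum>j<k. (if j = i then real (card (C i)) * x i else 0)
          + clique_partition_adj k C $$ (i,j) * x j)"
  proof (rule sum.cong[OF refl])
    fix j assume "j \<in> {..<k}"
    hence j: "j < k" by simp
    show "real (card (C i \<inter> C j)) * x j = (if j = i then real (card (C i)) * x i else 0)
          + clique_partition_adj k C $$ (i,j) * x j"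
    proof (cases "j = i")
      case True
      then show ?thesis using adj_index[OF i j, of C] by simp
    next
      case False
      then show ?thesis using adj_index[OF i j, of C] card_inter_cliques[OF G P i j] by simp
    qed
  qed
  also have "\<dots> = real (card (C i)) * x i + (\<Sum>j<k. clique_partition_adj k C $$ (i,j) * x j)"
    using i by (simp add: sum.distrib)
  finally show ?thesis .
qed

lemma quad_identity:
  fixes x :: "nat \<Rightarrow> real"
  assumes G: "simple_graph V E" and P: "clique_partition V E k C"
    and w_def: "\<And>v. w v = (\<Sum>j<k. if v \<in> C j then x j else 0)"
  shows "(\<Sum>v\<in>V. w v * w v) = (\<Sum>i<k. x i * (\<Sum>v\<in>C i. w v))"
proof -
  have fin: "finite V" using G unfolding simple_graph_def by blast
  have sub: "\<And>i. i < k \<Longrightarrow> V \<inter> C i = C i" using P unfolding clique_partition_def is_clique_def by blast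
  have "(\<Sum>v\<in>V. w v * w v) = (\<Sum>v\<in>V. \<Sum>i<k. if v \<in> C i then x i * w v else 0)"
  proof (rule sum.cong[OF refl])
    fix v
    have "w v * w v = (\<Sum>i<k. if v \<in> C i then x i else 0) * w v"
      by (subst (1) w_def) (rule refl)
    also have "\<dots> = (\<Sum>i<k. (if v \<in> C i then x i else 0) * w v)" by (rule sum_distrib_right)
    also have "\<dots> = (\<Sum>i<k. if v \<in> C i then x i * w v else 0)" by (rule sum.cong) auto
    finally show "w v * w v = (\<Sum>i<k. if v \<in> C i then x i * w v else 0)" .
  qed
  also have "\<dots> = (\<Sum>i<k. \<Sum>v\<in>V. if v \<in> C i then x i * w v else 0)" by (rule sum.swap)
  also have "\<dots> = (\<Sum>i<k. x i * (\<Sum>v\<in>C i. w v))"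
  proof (rule sum.cong[OF refl])
    fix i assume "i \<in> {..<k}"
    hence i: "i < k" by simp
    have "(\<Sum>v\<in>V. if v \<in> C i then x i * w v else 0) = (\<Sum>v\<in>V \<inter> C i. x i * w v)"
      by (rule sum.inter_restrict[OF fin, symmetric])
    also have "\<dots> = (\<Sum>v\<in>C i. x i * w v)" using sub[OF i] by simp
    also have "\<dots> = x i * (\<Sum>v\<in>C i. w v)" by (rule sum_distrib_left[symmetric])
    finally show "(\<Sum>v\<in>V. if v \<in> C i then x i * w v else 0) = x i * (\<Sum>v\<in>C i. w v)" .
  qed
  finally show ?thesis .
qed

lemma kernel_exists:
  fixes C :: "nat \<Rightarrow> 'a set"
  assumes fin: "finite V" and lt: "card V < k"
  shows "\<exists>y. y \<in> carrier_vec k \<and> y \<noteq> 0\<^sub>v k \<and>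
           (\<forall>v\<in>V. (\<Sum>j<k. if v \<in> C j then y $ j else 0) = (0::real))"
proof -
  let ?n = "card V"
  obtain g where g: "bij_betw g {0..<?n} V" using ex_bij_betw_nat_finite[OF fin] by blast
  define c where "c i = vec k (\<lambda>j. if i < ?n \<and> g i \<in> C j then 1 else (0::real))" for i
  define M where "M = mat\<^sub>r k k (\<lambda>i. if i = k - 1 then 0\<^sub>v k else c i)"
  have Mc: "M \<in> carrier_mat k k" unfolding M_def by simp
  have "det M = 0" unfolding M_def
    by (rule det_row_0, insert lt, auto simp: c_def)
  then obtain y where y: "y \<in> carrier_vec k" "y \<noteq> 0\<^sub>v k" "M *\<^sub>v y = 0\<^sub>v k"
    using det_0_iff_vec_prod_zero[OF Mc] by blast
  have "(\<Sum>j<k. if v \<in> C j then y $ j else 0) = 0" if v: "v \<in> V" for v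
  proof -
    from v g have "v \<in> g ` {0..<?n}" unfolding bij_betw_def by simp
    then obtain i where i: "i < ?n" "v = g i" by auto
    have ik: "i < k" "i \<noteq> k - 1" using i lt by auto
    have "0 = (M *\<^sub>v y) $ i" using y(3) ik by simp
    also have "\<dots> = row M i \<bullet> y" using ik Mc by simp
    also have "row M i = c i" unfolding M_def using ik by (simp add: c_def)
    also have "c i \<bullet> y = (\<Sum>j<k. if v \<in> C j then y $ j else 0)"
      unfolding c_def scalar_prod_def using y(1) i by (auto simp: lessThan_atLeast0 intro!: sum.cong)
    finally show ?thesis by simp
  qed
  thus ?thesis using y by blast
qed

theorem mainTheorem6:
  fixes V :: "'a set" and E :: "'a \<Rightarrow> 'a \<Rightarrow> bool" and k :: nat and C :: "nat \<Rightarrow> 'a set"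
  assumes "simple_graph V E"
    and "clique_partition V E k C"
    and "k \<ge> 1"
    and "\<forall>i j. i \<le> j \<and> j < k \<longrightarrow> card (C j) \<le> card (C i)"
  shows "min_eigenvalue (clique_partition_adj k C) \<ge> - real (card (C 0))
    \<and> ((\<forall>i<k. card (C i) = card (C 0)) \<and> k > card V
           \<longrightarrow> min_eigenvalue (clique_partition_adj k C) = - real (card (C 0)))"
proof -
  note G = assms(1) and P = assms(2)
  let ?A = "clique_partition_adj k C"
  let ?s = "card (C 0)"
  let ?S = "{\<mu>. eigenvalue ?A \<mu>}"
  have Ac: "?A \<in> carrier_mat k k" by (rule adj_carrier)
  have sym: "\<forall>i<k. \<forall>j<k. ?A $$ (i,j) = ?A $$ (j,i)" by (auto simp: adj_index Int_commute)
  have "char_poly ?A \<noteq> 0" using degree_monic_char_poly[OF Ac] by auto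
  hence fin: "finite ?S" using eigenvalue_root_char_poly[OF Ac] poly_roots_finite by simp
  have ne: "?S \<noteq> {}" using real_sym_eigenvalue_exists[OF Ac _ sym] assms(3) by auto
  have Av: "(?A *\<^sub>v y) $ i = (\<Sum>j<k. ?A $$ (i,j) * y $ j)" if "y \<in> carrier_vec k" "i < k" for y i
    using that Ac by (auto simp: scalar_prod_def lessThan_atLeast0 intro!: sum.cong)
  have cardle: "real (card (C i)) \<le> real ?s" if "i < k" for i using assms(4) that by auto
  have lb: "\<mu> \<ge> - real ?s" if evmu: "eigenvalue ?A \<mu>" for \<mu>
  proof -
    obtain y where y: "y \<in> carrier_vec k" "y \<noteq> 0\<^sub>v k" "?A *\<^sub>v y = \<mu> \<cdot>\<^sub>v y"
      using evmu Ac unfolding eigenvalue_def eigenvector_def by auto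
    define x where "x i = y $ i" for i
    define w where "w v = (\<Sum>j<k. if v \<in> C j then x j else 0)" for v
    have ev: "(\<Sum>j<k. ?A $$ (i,j) * x j) = \<mu> * x i" if i: "i < k" for i
    proof -
      have "(?A *\<^sub>v y) $ i = \<mu> * x i" using y(1,3) i unfolding x_def by (metis carrier_vecD index_smult_vec(1))
      thus ?thesis using Av[OF y(1) i] unfolding x_def by simp
    qed
    have row: "(\<Sum>v\<in>C i. w v) = real (card (C i)) * x i + (\<Sum>j<k. ?A $$ (i,j) * x j)" if "i < k" for i
      unfolding w_def by (rule row_identity[OF G P that])
    have quad: "(\<Sum>v\<in>V. w v * w v) = (\<Sum>i<k. x i * (\<Sum>v\<in>C i. w v))"
      by (rule quad_identity[OF G P]) (simp add: w_def)
    have "\<mu> * (\<Sum>i<k. x i * x i) = (\<Sum>i<k. \<mu> * (x i * x i))" by (rule sum_distrib_left)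
    also have "\<dots> = (\<Sum>i<k. x i * (\<Sum>j<k. ?A $$ (i,j) * x j))"
    proof (rule sum.cong[OF refl])
      fix i assume "i \<in> {..<k}"
      hence e: "(\<Sum>j<k. ?A $$ (i,j) * x j) = \<mu> * x i" by (intro ev) simp
      show "\<mu> * (x i * x i) = x i * (\<Sum>j<k. ?A $$ (i,j) * x j)" unfolding e by (simp add: mult_ac)
    qed
    also have "\<dots> = (\<Sum>i<k. x i * (\<Sum>v\<in>C i. w v) - real (card (C i)) * (x i * x i))"
      by (rule sum.cong[OF refl]) (simp add: row algebra_simps)
    also have "\<dots> = (\<Sum>v\<in>V. w v * w v) - (\<Sum>i<k. real (card (C i)) * (x i * x i))"
      unfolding quad by (rule sum_subtractf)
    also have "\<dots> \<ge> 0 - (\<Sum>i<k. real ?s * (x i * x i))"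
    proof (rule diff_mono)
      show "0 \<le> (\<Sum>v\<in>V. w v * w v)" by (rule sum_nonneg) simp
      show "(\<Sum>i<k. real (card (C i)) * (x i * x i)) \<le> (\<Sum>i<k. real ?s * (x i * x i))"
        by (rule sum_mono, rule mult_right_mono) (use cardle in auto)
    qed
    finally have ineq0: "0 - (\<Sum>i<k. real ?s * (x i * x i)) \<le> \<mu> * (\<Sum>i<k. x i * x i)" .
    have "(\<Sum>i<k. real ?s * (x i * x i)) = real ?s * (\<Sum>i<k. x i * x i)"
      by (rule sum_distrib_left[symmetric])
    with ineq0 have ineq: "\<mu> * (\<Sum>i<k. x i * x i) \<ge> - real ?s * (\<Sum>i<k. x i * x i)"
      by linarith
    from y(1,2) obtain i0 where i0: "i0 < k" "x i0 \<noteq> 0" unfolding x_def by force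
    have "(\<Sum>i<k. x i * x i) \<ge> x i0 * x i0"
      by (rule member_le_sum) (use i0 in auto)
    hence Q: "(\<Sum>i<k. x i * x i) > 0" using i0 by (smt (verit) not_real_square_gt_zero)
    show ?thesis using ineq Q by (meson mult_le_cancel_right_pos)
  qed
  have part1: "min_eigenvalue ?A \<ge> - real ?s"
    unfolding min_eigenvalue_def using fin ne lb by (simp add: Min_ge_iff)
  have part2: "min_eigenvalue ?A = - real ?s"
    if eq: "\<forall>i<k. card (C i) = ?s" and gt: "k > card V"
  proof -
    have finV: "finite V" using G unfolding simple_graph_def by blast
    obtain y where y: "y \<in> carrier_vec k" "y \<noteq> 0\<^sub>v k"
      and w0: "\<forall>v\<in>V. (\<Sum>j<k. if v \<in> C j then y $ j else 0) = (0::real)"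
      using kernel_exists[OF finV gt, of C] by blast
    have sub: "C i \<subseteq> V" if "i < k" for i using cp_clique[OF P that] unfolding is_clique_def by blast
    have "?A *\<^sub>v y = (- real ?s) \<cdot>\<^sub>v y"
    proof (rule eq_vecI)
      fix i assume "i < dim_vec ((- real ?s) \<cdot>\<^sub>v y)"
      hence i: "i < k" using y(1) by simp
      have r: "(\<Sum>v\<in>C i. \<Sum>j<k. if v \<in> C j then y $ j else 0)
          = real (card (C i)) * y $ i + (\<Sum>j<k. ?A $$ (i,j) * y $ j)"
        by (rule row_identity[OF G P i])
      have "(\<Sum>v\<in>C i. \<Sum>j<k. if v \<in> C j then y $ j else 0) = 0"
        using w0 sub[OF i] by (intro sum.neutral) blast
      moreover have "card (C i) = ?s" using eq i by blast
      ultimately have "(\<Sum>j<k. ?A $$ (i,j) * y $ j) = - real ?s * y $ i" using r by simp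
      thus "(?A *\<^sub>v y) $ i = ((- real ?s) \<cdot>\<^sub>v y) $ i" using Av[OF y(1) i] i y(1) by simp
    qed (use y(1) Ac in simp)
    hence "eigenvalue ?A (- real ?s)" unfolding eigenvalue_def eigenvector_def using y Ac by auto
    thus ?thesis unfolding min_eigenvalue_def
      by (intro Min_eqI[OF fin]) (auto intro: lb)
  qed
  show ?thesis using part1 part2 by blast
qed

end
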